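(* Let $p$ be a lattice norm on $\mathbb{R}^2$ with $p((1,0))=p((0,1))=1$, and let $\Phi$ be an Orlicz function which does not satisfy the suitable $\Delta_2$-condition (relative to $(\Omega,\Sigma,\mu)$). Then for every $\varepsilon>0$ there exists a linear operator $P_\varepsilon:\ell^\infty\to L^\Phi(\mu)$ which is nonnegative (i.e. $P_\varepsilon z\ge0$ a.e. whenever $z\ge0$ coordinatewise) and satisfies $$\|z\|_\infty\le\|P_\varepsilon z\|_{\Phi,p}\le(1+\varepsilon)\|z\|_\infty\qquad\text{for all }z\in\ell^\infty.$$
   Context: $(\Omega,\Sigma,\mu)$ is a $\sigma$-finite complete measure space; all atoms are assumed to have measure $1$ and the set of atoms is either finite or countably infinite (identified with $\mathbb{N}$). Write $\Omega_a$ for the union of atoms and $\Omega_{na}=\Omega\setminus\Omega_a$. $L^0$ is the space of (classes of a.e. equal) real measurable functions. An Orlicz function is a function $\Phi:\mathbb{R}\to[0,\infty)$ which is convex, even, vanishes at $0$ and is not identically zero. $I_\Phi(x)=\int_\Omega\Phi(x(t))\,d\mu\in[0,+\infty]$; $L^\Phi(\mu)=\{x\in L^0: I_\Phi(\lambda x)<\infty\text{ for some }\lambda>0\}$. A lattice norm on $\mathbb{R}^2$ is a norm $p$ with $p((u,v))\le p((u',v'))$ whenever $|u|\le|u'|,|v|\le|v'|$; $\|x\|_{\Phi,p}=\inf_{k>0}\frac1k p((1,I_\Phi(kx)))$ with the convention $p((1,+\infty))=+\infty$. $\Phi\in\Delta_2(\mathbb{R}_+)$ means there is $K>0$ with $\Phi(2u)\le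 K\Phi(u)$ for all $u\ge0$; $\Phi\in\Delta_2(\infty)$ means there are $u_0,K>0$ with $\Phi(2u)\le K\Phi(u)$ for all $u\ge u_0$; $\Phi\in\Delta_2(0)$ means there are $u_0,K>0$ with $\Phi(2u)\le K\Phi(u)$ for all $u\in[0,u_0]$. The suitable $\Delta_2$-condition is: $\Delta_2(\mathbb{R}_+)$ if $\mu$ is non-atomic and $\mu(\Omega)=\infty$; $\Delta_2(\infty)$ if $\mu$ is non-atomic and finite; $\Delta_2(0)$ if $\Omega=\mathbb{N}$ with counting measure; if $\mu(\Omega_{na})>0$ and there are finitely many atoms, the condition suitable for the non-atomic part $\Omega_{na}$; if $\mu(\Omega_{na})>0$ and the atoms form a copy of $\mathbb{N}$, the conjunction of the condition suitable for $\Omega_{na}$ and $\Delta_2(0)$. *)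

theory Defs
  imports "HOL-Analysis.Analysis"
begin

definition orlicz_function :: "(real \<Rightarrow> real) \<Rightarrow> bool" where
  "orlicz_function \<Phi> \<longleftrightarrow> convex_on UNIV \<Phi> \<and> (\<forall>u. \<Phi> (- u) = \<Phi> u) \<and> \<Phi> 0 = 0
     \<and> (\<forall>u. 0 \<le> \<Phi> u) \<and> (\<exists>u. \<Phi> u \<noteq> 0)"

definition lattice_norm :: "(real \<times> real \<Rightarrow> real) \<Rightarrow> bool" where
  "lattice_norm p \<longleftrightarrow>
     (\<forall>x. p x = 0 \<longleftrightarrow> x = 0) \<and>
     (\<forall>c x. p (c *\<^sub>R x) = \<bar>c\<bar> * p x) \<and>
     (\<forall>x y. p (x + y) \<le> p x + p y) \<and>
     (\<forall>u v u' v'. \<bar>u\<bar> \<le> \<bar>u'\<bar> \<and> \<bar>v\<bar> \<le> \<bar>v'\<bar> \<longrightarrow> p (u, v) \<le> p (u', v'))"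

definition I_Phi :: "'a measure \<Rightarrow> (real \<Rightarrow> real) \<Rightarrow> ('a \<Rightarrow> real) \<Rightarrow> ennreal" where
  "I_Phi M \<Phi> x = (\<integral>\<^sup>+ t. ennreal (\<Phi> (x t)) \<partial>M)"

definition orlicz_space :: "'a measure \<Rightarrow> (real \<Rightarrow> real) \<Rightarrow> ('a \<Rightarrow> real) set" where
  "orlicz_space M \<Phi> = {x \<in> borel_measurable M. \<exists>c>0. I_Phi M \<Phi> (\<lambda>t. c * x t) < \<infinity>}"

text \<open>\<open>\<parallel>x\<parallel>_{\<Phi>,p} = inf_{k>0} (1/k) p(1, I_\<Phi>(kx))\<close>, with \<open>p(1,\<infinity>) = \<infinity>\<close>:
  values of k with infinite modular contribute \<infinity> and hence can be dropped from the infimum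
  (for x in the Orlicz space the remaining set is nonempty).\<close>
definition orlicz_norm :: "'a measure \<Rightarrow> (real \<Rightarrow> real) \<Rightarrow> (real \<times> real \<Rightarrow> real) \<Rightarrow> ('a \<Rightarrow> real) \<Rightarrow> real" where
  "orlicz_norm M \<Phi> p x =
     Inf {(1 / k) * p (1, enn2real (I_Phi M \<Phi> (\<lambda>t. k * x t))) | k. k > 0 \<and> I_Phi M \<Phi> (\<lambda>t. k * x t) < \<infinity>}"

definition delta2_Rplus :: "(real \<Rightarrow> real) \<Rightarrow> bool" where
  "delta2_Rplus \<Phi> \<longleftrightarrow> (\<exists>K>0. \<forall>u\<ge>0. \<Phi> (2 * u) \<le> K * \<Phi> u)"

definition delta2_infty :: "(real \<Rightarrow> real) \<Rightarrow> bool" where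
  "delta2_infty \<Phi> \<longleftrightarrow> (\<exists>u0>0. \<exists>K>0. \<forall>u\<ge>u0. \<Phi> (2 * u) \<le> K * \<Phi> u)"

definition delta2_zero :: "(real \<Rightarrow> real) \<Rightarrow> bool" where
  "delta2_zero \<Phi> \<longleftrightarrow> (\<exists>u0>0. \<exists>K>0. \<forall>u. 0 \<le> u \<and> u \<le> u0 \<longrightarrow> \<Phi> (2 * u) \<le> K * \<Phi> u)"

definition measure_atom :: "'a measure \<Rightarrow> 'a set \<Rightarrow> bool" where
  "measure_atom M B \<longleftrightarrow> B \<in> sets M \<and> 0 < emeasure M B \<and>
     (\<forall>C\<in>sets M. C \<subseteq> B \<longrightarrow> emeasure M C = 0 \<or> emeasure M (B - C) = 0)"

definition atomic_structure :: "'a measure \<Rightarrow> nat set \<Rightarrow> (nat \<Rightarrow> 'a set) \<Rightarrow> bool" where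
  "atomic_structure M N A \<longleftrightarrow>
     ((\<exists>n. N = {..<n}) \<or> N = UNIV) \<and>
     (\<forall>i\<in>N. measure_atom M (A i) \<and> emeasure M (A i) = 1) \<and>
     disjoint_family_on A N \<and>
     (\<forall>B. B \<subseteq> space M - (\<Union>i\<in>N. A i) \<longrightarrow> \<not> measure_atom M B)"

definition nonatomic_part :: "'a measure \<Rightarrow> nat set \<Rightarrow> (nat \<Rightarrow> 'a set) \<Rightarrow> 'a set" where
  "nonatomic_part M N A = space M - (\<Union>i\<in>N. A i)"

text \<open>The suitable \<Delta>_2-condition.  In the degenerate case (\<mu>(\<Omega>_na)=0 and finitely many atoms,
  not covered by the paper) we declare it satisfied.\<close>
definition suitable_delta2 :: "'a measure \<Rightarrow> nat set \<Rightarrow> (nat \<Rightarrow> 'a set) \<Rightarrow> (real \<Rightarrow> real) \<Rightarrow> bool" where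
  "suitable_delta2 M N A \<Phi> =
     (let na = nonatomic_part M N A;
          na_cond = (if emeasure M na = \<infinity> then delta2_Rplus \<Phi> else delta2_infty \<Phi>)
      in if emeasure M na = 0 then (if finite N then True else delta2_zero \<Phi>)
         else (if finite N then na_cond else na_cond \<and> delta2_zero \<Phi>))"

definition sup_norm :: "(nat \<Rightarrow> real) \<Rightarrow> real" where
  "sup_norm z = (SUP n. \<bar>z n\<bar>)"

definition linfty :: "(nat \<Rightarrow> real) set" where
  "linfty = {z. bounded (range z)}"

end

theory Submission
  imports Defs
begin


lemma phi_basic:
  assumes "orlicz_function \<Phi>"
  shows "\<Phi> 0 = 0" "\<And>u. \<Phi> (-u) = \<Phi> u" "\<And>u. 0 \<le> \<Phi> u" "convex_on UNIV \<Phi>"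
  using assms unfolding orlicz_function_def by auto

lemma phi_abs: assumes "orlicz_function \<Phi>" shows "\<Phi> \<bar>x\<bar> = \<Phi> x"
  using phi_basic(2)[OF assms, of x] by (cases "x \<ge> 0") auto

lemma phi_scale:
  assumes "orlicz_function \<Phi>" "0 \<le> l" "l \<le> 1"
  shows "\<Phi> (l * x) \<le> l * \<Phi> x"
proof -
  have "\<Phi> ((1 - l) *\<^sub>R 0 + l *\<^sub>R x) \<le> (1 - l) * \<Phi> 0 + l * \<Phi> x"
    using convex_onD[OF phi_basic(4)[OF assms(1)]] assms(2,3) by blast
  thus ?thesis using phi_basic(1)[OF assms(1)] by simp
qed

lemma phi_mono:
  assumes "orlicz_function \<Phi>" "\<bar>x\<bar> \<le> \<bar>y\<bar>"
  shows "\<Phi> x \<le> \<Phi> y"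
proof (cases "y = 0")
  case True thus ?thesis using assms by simp
next
  case False
  define l where "l = \<bar>x\<bar> / \<bar>y\<bar>"
  have l: "0 \<le> l" "l \<le> 1" using assms False by (auto simp: l_def)
  have "\<Phi> x = \<Phi> (l * \<bar>y\<bar>)" using False phi_abs[OF assms(1), of x] by (simp add: l_def)
  also have "\<dots> \<le> l * \<Phi> \<bar>y\<bar>" by (rule phi_scale[OF assms(1) l])
  also have "\<dots> \<le> \<Phi> \<bar>y\<bar>" using l phi_basic(3)[OF assms(1), of "\<bar>y\<bar>"]
    by (simp add: mult_left_le_one_le)
  finally show ?thesis using phi_abs[OF assms(1)] by simp
qed

lemma phi_super:
  assumes "orlicz_function \<Phi>" "1 \<le> m"
  shows "m * \<Phi> x \<le> \<Phi> (m * x)"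
proof -
  have "\<Phi> ((1/m) * (m * x)) \<le> (1/m) * \<Phi> (m * x)"
    using assms by (intro phi_scale) auto
  thus ?thesis using assms by (simp add: field_simps)
qed

lemma phi_unbounded:
  assumes "orlicz_function \<Phi>"
  shows "\<exists>v\<ge>0. T \<le> \<Phi> v"
proof -
  obtain u where u: "\<Phi> u \<noteq> 0" using assms unfolding orlicz_function_def by auto
  have pos: "\<Phi> \<bar>u\<bar> > 0" using u phi_abs[OF assms] phi_basic(3)[OF assms, of u] by auto
  define m where "m = max 1 (T / \<Phi> \<bar>u\<bar>)"
  have "m * \<Phi> \<bar>u\<bar> \<le> \<Phi> (m * \<bar>u\<bar>)" by (rule phi_super[OF assms]) (simp add: m_def)
  moreover have "T \<le> m * \<Phi> \<bar>u\<bar>" using pos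
    by (simp add: m_def) (metis (no_types) divide_le_eq le_max_iff_disj linorder_le_cases max.cobounded2 max_def mult.commute pos)
  moreover have "0 \<le> m * \<bar>u\<bar>" by (simp add: m_def)
  ultimately show ?thesis by (intro exI[of _ "m * \<bar>u\<bar>"]) auto
qed

lemma phi_iter:
  fixes \<Phi> :: "real \<Rightarrow> real"
  assumes "L \<ge> 0" "\<And>i. i < j \<Longrightarrow> \<Phi> ((1+d)^Suc i * v) \<le> L * \<Phi> ((1+d)^i * v)"
    "\<And>u. 0 \<le> \<Phi> u"
  shows "\<Phi> ((1+d)^j * v) \<le> L^j * \<Phi> v"
  using assms(2)
proof (induction j)
  case 0 thus ?case by simp
next
  case (Suc j)
  have "\<Phi> ((1+d)^Suc j * v) \<le> L * \<Phi> ((1+d)^j * v)" using Suc.prems by auto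
  also have "\<dots> \<le> L * (L^j * \<Phi> v)" using Suc assms(1) by (intro mult_left_mono) auto
  finally show ?case by simp
qed



lemma ratio_core:
  fixes \<Phi> :: "real \<Rightarrow> real"
  assumes "orlicz_function \<Phi>" "d > 0" "c > 0" "v \<ge> 0" "2 \<le> (1+d)^j"
    and H: "\<And>i. i < j \<Longrightarrow> c * \<Phi> ((1+d)^Suc i * v) \<le> \<Phi> ((1+d)^i * v)"
  shows "\<Phi> (2 * v) \<le> (1/c)^j * \<Phi> v"
proof -
  have "\<Phi> (2 * v) \<le> \<Phi> ((1+d)^j * v)"
    using assms(2,4,5) by (intro phi_mono[OF assms(1)]) (auto intro: mult_right_mono)
  also have "\<dots> \<le> (1/c)^j * \<Phi> v"
  proof (rule phi_iter)
    show "0 \<le> 1/c" using assms by simp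
    show "\<And>u. 0 \<le> \<Phi> u" using phi_basic(3)[OF assms(1)] .
    fix i assume "i < j"
    from H[OF this] show "\<Phi> ((1+d)^Suc i * v) \<le> 1/c * \<Phi> ((1+d)^i * v)"
      using assms(3) by (simp add: field_simps)
  qed
  finally show ?thesis .
qed

lemma arch2: assumes "d > (0::real)" obtains j where "2 \<le> (1+d)^j"
  using real_arch_pow[of "1+d" 2] assms by (auto intro: less_imp_le)

lemma ratio_Rplus:
  fixes \<Phi> :: "real \<Rightarrow> real"
  assumes "orlicz_function \<Phi>" "\<not> delta2_Rplus \<Phi>" "d > 0" "c > 0"
  shows "\<exists>u\<ge>0. \<Phi> (u/(1+d)) < c * \<Phi> u"
proof (rule ccontr)
  assume "\<not> ?thesis"
  hence H: "\<And>u. u \<ge> 0 \<Longrightarrow> c * \<Phi> u \<le> \<Phi> (u/(1+d))" by (auto simp: not_less)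
  obtain j where j: "2 \<le> (1+d)^j" using arch2[OF assms(3)] by blast
  have "\<forall>v\<ge>0. \<Phi> (2 * v) \<le> (1/c)^j * \<Phi> v"
  proof (intro allI impI)
    fix v :: real assume v: "v \<ge> 0"
    show "\<Phi> (2 * v) \<le> (1/c)^j * \<Phi> v"
    proof (rule ratio_core[OF assms(1,3,4) v j])
      fix i assume "i < j"
      have "c * \<Phi> ((1+d)^Suc i * v) \<le> \<Phi> ((1+d)^Suc i * v / (1+d))"
        using v assms(3) by (intro H) auto
      also have "(1+d)^Suc i * v / (1+d) = (1+d)^i * v" using assms(3) by simp
      finally show "c * \<Phi> ((1+d)^Suc i * v) \<le> \<Phi> ((1+d)^i * v)" .
    qed
  qed
  hence "delta2_Rplus \<Phi>" unfolding delta2_Rplus_def using assms(4)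
    by (intro exI[of _ "(1/c)^j"]) auto
  with assms(2) show False by simp
qed

lemma ratio_infty:
  fixes \<Phi> :: "real \<Rightarrow> real"
  assumes "orlicz_function \<Phi>" "\<not> delta2_infty \<Phi>" "d > 0" "c > 0" "U0 > 0"
  shows "\<exists>u\<ge>U0. \<Phi> (u/(1+d)) < c * \<Phi> u"
proof (rule ccontr)
  assume "\<not> ?thesis"
  hence H: "\<And>u. u \<ge> U0 \<Longrightarrow> c * \<Phi> u \<le> \<Phi> (u/(1+d))" by (auto simp: not_less)
  obtain j where j: "2 \<le> (1+d)^j" using arch2[OF assms(3)] by blast
  have "\<forall>v\<ge>U0. \<Phi> (2 * v) \<le> (1/c)^j * \<Phi> v"
  proof (intro allI impI)
    fix v :: real assume v: "v \<ge> U0"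
    show "\<Phi> (2 * v) \<le> (1/c)^j * \<Phi> v"
    proof (rule ratio_core[OF assms(1,3,4) _ j])
      show "v \<ge> 0" using v assms(5) by simp
      fix i assume "i < j"
      have "1 \<le> (1+d)^Suc i" using assms(3) by (intro one_le_power) simp
      hence "U0 \<le> (1+d)^Suc i * v" using v assms(5)
        by (metis dual_order.trans less_eq_real_def mult_1 mult_right_mono zero_le_one)
      hence "c * \<Phi> ((1+d)^Suc i * v) \<le> \<Phi> ((1+d)^Suc i * v / (1+d))"
        by (intro H)
      also have "(1+d)^Suc i * v / (1+d) = (1+d)^i * v" using assms(3) by simp
      finally show "c * \<Phi> ((1+d)^Suc i * v) \<le> \<Phi> ((1+d)^i * v)" .
    qed
  qed
  hence "delta2_infty \<Phi>" unfolding delta2_infty_def using assms(4,5)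
    by (intro exI[of _ U0] conjI exI[of _ "(1/c)^j"]) auto
  with assms(2) show False by simp
qed

lemma ratio_zero:
  fixes \<Phi> :: "real \<Rightarrow> real"
  assumes "orlicz_function \<Phi>" "\<not> delta2_zero \<Phi>" "d > 0" "c > 0" "U0 > 0"
  shows "\<exists>u. 0 \<le> u \<and> u \<le> U0 \<and> \<Phi> (u/(1+d)) < c * \<Phi> u"
proof (rule ccontr)
  assume "\<not> ?thesis"
  hence H: "\<And>u. 0 \<le> u \<Longrightarrow> u \<le> U0 \<Longrightarrow> c * \<Phi> u \<le> \<Phi> (u/(1+d))" by (auto simp: not_less)
  obtain j where j: "2 \<le> (1+d)^j" using arch2[OF assms(3)] by blast
  define u0 where "u0 = U0 / (1+d)^j"
  have u0: "u0 > 0" using assms(3,5) by (simp add: u0_def)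
  have "\<forall>v. 0 \<le> v \<and> v \<le> u0 \<longrightarrow> \<Phi> (2 * v) \<le> (1/c)^j * \<Phi> v"
  proof (intro allI impI)
    fix v :: real assume v: "0 \<le> v \<and> v \<le> u0"
    show "\<Phi> (2 * v) \<le> (1/c)^j * \<Phi> v"
    proof (rule ratio_core[OF assms(1,3,4) _ j])
      show "v \<ge> 0" using v by simp
      fix i assume "i < j"
      have "(1+d)^Suc i \<le> (1+d)^j" using \<open>i < j\<close> assms(3) by (intro power_increasing) auto
      hence "(1+d)^Suc i * v \<le> (1+d)^j * u0" using v assms(3)
        by (intro mult_mono) auto
      also have "(1+d)^j * u0 = U0" using assms(3) by (simp add: u0_def)
      finally have "(1+d)^Suc i * v \<le> U0" .
      hence "c * \<Phi> ((1+d)^Suc i * v) \<le> \<Phi> ((1+d)^Suc i * v / (1+d))"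
        using v assms(3) by (intro H) auto
      also have "(1+d)^Suc i * v / (1+d) = (1+d)^i * v" using assms(3) by simp
      finally show "c * \<Phi> ((1+d)^Suc i * v) \<le> \<Phi> ((1+d)^i * v)" .
    qed
  qed
  hence "delta2_zero \<Phi>" unfolding delta2_zero_def using assms(4) u0
    by (intro exI[of _ u0] conjI exI[of _ "(1/c)^j"]) auto
  with assms(2) show False by simp
qed



lemma single_sum:
  fixes f :: "nat \<Rightarrow> 'b::{t2_space,comm_monoid_add,semiring_1}"
  assumes "disjoint_family E" "t \<in> E m"
  shows "(\<Sum>n. f n * indicator (E n) t) = f m"
proof -
  have "(\<lambda>n. f n * indicator (E n) t) = (\<lambda>n. if n = m then f n else 0)"
  proof
    fix n show "f n * indicator (E n) t = (if n = m then f n else 0)"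
      using assms unfolding disjoint_family_on_def by (cases "n = m") (auto simp: indicator_def)
  qed
  thus ?thesis using sums_single[of m f] sums_unique by metis
qed

lemma zero_sum:
  fixes f :: "nat \<Rightarrow> 'b::{t2_space,comm_monoid_add,semiring_1}"
  assumes "t \<notin> (\<Union>n. E n)"
  shows "(\<Sum>n. f n * indicator (E n) t) = 0"
  using assms by (simp add: indicator_def)

lemma p_facts:
  assumes "lattice_norm p" "p (1,0) = 1" "p (0,1) = 1"
  shows "\<And>x. 0 \<le> p x" "\<And>r. 1 \<le> p (1, r)" "\<And>r. 0 \<le> r \<Longrightarrow> r \<le> p (1, r)"
    "\<And>r. 0 \<le> r \<Longrightarrow> p (1, r) \<le> 1 + r"
proof -
  have hom: "\<And>c x. p (c *\<^sub>R x) = \<bar>c\<bar> * p x" and tri: "\<And>x y. p (x + y) \<le> p x + p y"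
    and mon: "\<And>u v u' v'. \<bar>u\<bar> \<le> \<bar>u'\<bar> \<Longrightarrow> \<bar>v\<bar> \<le> \<bar>v'\<bar> \<Longrightarrow> p (u, v) \<le> p (u', v')"
    using assms(1) unfolding lattice_norm_def by auto
  have z: "p 0 = 0" using assms(1) unfolding lattice_norm_def by blast
  show nn: "0 \<le> p x" for x
  proof -
    have "p 0 \<le> p x + p (-x)" using tri[of x "-x"] by simp
    moreover have "p (-x) = p x" using hom[of "-1" x] by simp
    ultimately show ?thesis using z by simp
  qed
  show "1 \<le> p (1, r)" for r using mon[of 1 1 0 r] assms(2) by simp
  have p0: "p (0, r) = \<bar>r\<bar>" for r using hom[of r "(0,1)"] assms(3) by simp
  show "0 \<le> r \<Longrightarrow> r \<le> p (1, r)" for r using mon[of 0 1 r r] p0[of r] by simp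
  show "0 \<le> r \<Longrightarrow> p (1, r) \<le> 1 + r" for r using tri[of "(1,0)" "(0,r)"] p0[of r] assms(2) by simp
qed

lemma linfty_bdd:
  assumes "z \<in> linfty"
  shows "bdd_above (range (\<lambda>n. \<bar>z n\<bar>))" "\<And>n. \<bar>z n\<bar> \<le> sup_norm z" "0 \<le> sup_norm z"
proof -
  from assms obtain B where B: "\<And>n. \<bar>z n\<bar> \<le> B"
    unfolding linfty_def bounded_iff by auto
  show bd: "bdd_above (range (\<lambda>n. \<bar>z n\<bar>))" using B by (intro bdd_aboveI[of _ B]) auto
  show "\<bar>z n\<bar> \<le> sup_norm z" for n unfolding sup_norm_def using bd by (intro cSUP_upper) auto
  thus "0 \<le> sup_norm z" by (meson abs_ge_zero order_trans)
qed

lemma core: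
  fixes M :: "'a measure" and \<Phi> :: "real \<Rightarrow> real" and E :: "nat \<Rightarrow> 'a set"
  assumes Phi: "orlicz_function \<Phi>" and pn: "lattice_norm p" "p (1, 0) = 1" "p (0, 1) = 1"
    and disj: "disjoint_family E" and meas: "\<And>n. E n \<in> sets M" and u: "\<And>n. 0 \<le> u n"
    and low: "\<And>n. 1 \<le> ennreal (\<Phi> (u n)) * emeasure M (E n)"
    and up: "(\<Sum>n. ennreal (\<Phi> (u n / (1+d))) * emeasure M (E n)) \<le> ennreal d"
    and d: "d > 0" "(1+d)^2 \<le> 1 + \<epsilon>"
  shows "\<exists>P :: (nat \<Rightarrow> real) \<Rightarrow> ('a \<Rightarrow> real).
           (\<forall>z\<in>linfty. P z \<in> orlicz_space M \<Phi>) \<and>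
           (\<forall>z\<in>linfty. \<forall>w\<in>linfty. \<forall>a b.
              AE t in M. P (\<lambda>n. a * z n + b * w n) t = a * P z t + b * P w t) \<and>
           (\<forall>z\<in>linfty. (\<forall>n. 0 \<le> z n) \<longrightarrow> (AE t in M. 0 \<le> P z t)) \<and>
           (\<forall>z\<in>linfty. sup_norm z \<le> orlicz_norm M \<Phi> p (P z) \<and>
                        orlicz_norm M \<Phi> p (P z) \<le> (1 + \<epsilon>) * sup_norm z)"
proof -
  define P where "P z t = (\<Sum>n. (z n * u n) * indicator (E n) t)" for z :: "nat \<Rightarrow> real" and t
  have Pin: "P z t = z m * u m" if "t \<in> E m" for z t m
    unfolding P_def using single_sum[OF disj that] .
  have Pout: "P z t = 0" if "t \<notin> (\<Union>n. E n)" for z t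
    unfolding P_def using zero_sum[OF that] .
  have Pmeas: "P z \<in> borel_measurable M" for z
    unfolding P_def using meas by (intro borel_measurable_suminf) auto
  have Iform: "I_Phi M \<Phi> (\<lambda>t. k * P z t) = (\<Sum>n. ennreal (\<Phi> (k * (z n * u n))) * emeasure M (E n))"
    for k z
  proof -
    have pt: "ennreal (\<Phi> (k * P z t)) = (\<Sum>n. ennreal (\<Phi> (k * (z n * u n))) * indicator (E n) t)" for t
    proof (cases "t \<in> (\<Union>n. E n)")
      case True
      then obtain m where m: "t \<in> E m" by auto
      show ?thesis using single_sum[OF disj m, of "\<lambda>n. ennreal (\<Phi> (k * (z n * u n)))"] Pin[OF m]
        by simp
    next
      case False
      show ?thesis using zero_sum[OF False, of "\<lambda>n. ennreal (\<Phi> (k * (z n * u n)))"] Pout[OF False]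
        phi_basic(1)[OF Phi] by simp
    qed
    have "I_Phi M \<Phi> (\<lambda>t. k * P z t) = (\<integral>\<^sup>+ t. (\<Sum>n. ennreal (\<Phi> (k * (z n * u n))) * indicator (E n) t) \<partial>M)"
      unfolding I_Phi_def using pt by simp
    also have "\<dots> = (\<Sum>n. \<integral>\<^sup>+ t. ennreal (\<Phi> (k * (z n * u n))) * indicator (E n) t \<partial>M)"
      using meas by (intro nn_integral_suminf) auto
    also have "\<dots> = (\<Sum>n. ennreal (\<Phi> (k * (z n * u n))) * emeasure M (E n))"
      using meas by (simp add: nn_integral_cmult_indicator)
    finally show ?thesis .
  qed
  have Ilow: "ennreal (\<Phi> (k * (z m * u m))) * emeasure M (E m) \<le> I_Phi M \<Phi> (\<lambda>t. k * P z t)" for k z m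
  proof -
    have "ennreal (\<Phi> (k * (z m * u m))) * emeasure M (E m)
          = (\<integral>\<^sup>+ t. ennreal (\<Phi> (k * (z m * u m))) * indicator (E m) t \<partial>M)"
      using meas by (simp add: nn_integral_cmult_indicator)
    also have "\<dots> \<le> I_Phi M \<Phi> (\<lambda>t. k * P z t)"
      unfolding I_Phi_def
    proof (intro nn_integral_mono)
      fix t show "ennreal (\<Phi> (k * (z m * u m))) * indicator (E m) t \<le> ennreal (\<Phi> (k * P z t))"
        using Pin[of t m z] by (cases "t \<in> E m") auto
    qed
    finally show ?thesis .
  qed
  have Iup: "I_Phi M \<Phi> (\<lambda>t. k * P z t) \<le> ennreal d"
    if z: "z \<in> linfty" and s': "sup_norm z < s'" and k: "k = 1 / ((1+d) * s')" for z s' k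
  proof -
    have s'pos: "s' > 0" using linfty_bdd(3)[OF z] s' by simp
    have "(\<Sum>n. ennreal (\<Phi> (k * (z n * u n))) * emeasure M (E n))
          \<le> (\<Sum>n. ennreal (\<Phi> (u n / (1+d))) * emeasure M (E n))"
    proof (intro suminf_le summableI mult_right_mono ennreal_leI)
      fix n
      have zn: "\<bar>z n\<bar> \<le> s'" using linfty_bdd(2)[OF z, of n] s' by simp
      have "\<bar>k * (z n * u n)\<bar> = \<bar>z n\<bar> * u n / ((1+d) * s')"
        using k u[of n] d s'pos by (simp add: abs_mult)
      also have "\<dots> \<le> s' * u n / ((1+d) * s')"
        using zn u[of n] d s'pos by (intro divide_right_mono mult_right_mono) auto
      also have "\<dots> = \<bar>u n / (1+d)\<bar>" using s'pos d u[of n] by simp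
      finally show "\<Phi> (k * (z n * u n)) \<le> \<Phi> (u n / (1+d))" by (rule phi_mono[OF Phi])
    qed auto
    thus ?thesis using up Iform by (metis order_trans)
  qed
  have pf: "\<And>x. 0 \<le> p x" "\<And>r. 1 \<le> p (1, r)" "\<And>r. 0 \<le> r \<Longrightarrow> r \<le> p (1, r)"
    "\<And>r. 0 \<le> r \<Longrightarrow> p (1, r) \<le> 1 + r" using p_facts[OF pn] by auto
  define S where "S z = {(1 / k) * p (1, enn2real (I_Phi M \<Phi> (\<lambda>t. k * P z t))) | k. k > 0 \<and> I_Phi M \<Phi> (\<lambda>t. k * P z t) < \<infinity>}" for z
  have normS: "orlicz_norm M \<Phi> p (P z) = Inf (S z)" for z unfolding orlicz_norm_def S_def by simp
  have bddS: "bdd_below (S z)" for z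
    unfolding S_def by (rule bdd_belowI[of _ 0]) (auto intro!: divide_nonneg_nonneg pf(1))
  have elemS: "(1+d) * s' * p (1, enn2real (I_Phi M \<Phi> (\<lambda>t. 1 / ((1+d) * s') * P z t))) \<in> S z"
    if z: "z \<in> linfty" and s': "sup_norm z < s'" for z s'
  proof -
    have s'pos: "s' > 0" using linfty_bdd(3)[OF z] s' by simp
    have "I_Phi M \<Phi> (\<lambda>t. 1 / ((1+d) * s') * P z t) < \<infinity>"
      using Iup[OF z s' refl] by (metis ennreal_less_top infinity_ennreal_def order.strict_trans1)
    thus ?thesis unfolding S_def using s'pos d
      by (intro CollectI exI[of _ "1 / ((1+d) * s')"]) auto
  qed
  show ?thesis
  proof (intro exI[of _ P] conjI ballI allI impI)
    fix z :: "nat \<Rightarrow> real" assume z: "z \<in> linfty"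
    define s where "s = sup_norm z"
    have s0: "0 \<le> s" using linfty_bdd(3)[OF z] by (simp add: s_def)
    show "P z \<in> orlicz_space M \<Phi>"
      unfolding orlicz_space_def
    proof (intro CollectI conjI Pmeas exI[of _ "1 / ((1+d) * (s+1))"])
      show "0 < 1 / ((1+d) * (s+1))" using s0 d by simp
      show "I_Phi M \<Phi> (\<lambda>t. 1 / ((1+d) * (s+1)) * P z t) < \<infinity>"
      proof -
        have "sup_norm z < s + 1" by (simp add: s_def)
        from Iup[OF z this refl] show ?thesis
          using ennreal_less_top order.strict_trans1 by (metis infinity_ennreal_def)
      qed
    qed
    show "AE t in M. 0 \<le> P z t" if "\<forall>n. 0 \<le> z n"
    proof (intro AE_I2)
      fix t show "0 \<le> P z t"
      proof (cases "t \<in> (\<Union>n. E n)")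
        case True then obtain m where "t \<in> E m" by auto
        thus ?thesis using Pin that u by simp
      qed (simp add: Pout)
    qed
    show "sup_norm z \<le> orlicz_norm M \<Phi> p (P z)"
      unfolding normS
    proof (rule cInf_greatest)
      show "S z \<noteq> {}" using elemS[OF z, of "s+1"] s_def by auto
      fix e assume "e \<in> S z"
      then obtain k where k: "k > 0" "I_Phi M \<Phi> (\<lambda>t. k * P z t) < \<infinity>"
        and e: "e = (1 / k) * p (1, enn2real (I_Phi M \<Phi> (\<lambda>t. k * P z t)))"
        unfolding S_def by auto
      define r where "r = enn2real (I_Phi M \<Phi> (\<lambda>t. k * P z t))"
      have r0: "0 \<le> r" by (simp add: r_def)
      have Ir: "I_Phi M \<Phi> (\<lambda>t. k * P z t) = ennreal r"
        using k(2) unfolding r_def by (simp add: ennreal_enn2real_if)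
      show "sup_norm z \<le> e" unfolding sup_norm_def
      proof (rule cSUP_least)
        fix n assume "n \<in> (UNIV :: nat set)"
        show "\<bar>z n\<bar> \<le> e"
        proof (cases "k * \<bar>z n\<bar> \<le> 1")
          case True
          hence "\<bar>z n\<bar> \<le> 1 / k" using k(1) by (simp add: field_simps)
          also have "\<dots> = 1/k * 1" by simp
          also have "\<dots> \<le> e" unfolding e using k(1) by (intro mult_left_mono pf(2)) auto
          finally show ?thesis .
        next
          case False
          define m where "m = k * \<bar>z n\<bar>"
          have m1: "1 \<le> m" using False by (simp add: m_def)
          have "\<Phi> (k * (z n * u n)) = \<Phi> (m * u n)"
            using phi_abs[OF Phi, of "k * (z n * u n)"] k(1) u[of n]
            by (simp add: m_def abs_mult mult.assoc)
          hence "m * \<Phi> (u n) \<le> \<Phi> (k * (z n * u n))" using phi_super[OF Phi m1] by simp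
          hence "ennreal (m * \<Phi> (u n)) * emeasure M (E n)
                   \<le> ennreal (\<Phi> (k * (z n * u n))) * emeasure M (E n)"
            by (intro mult_right_mono ennreal_leI) auto
          moreover have "ennreal (m * \<Phi> (u n)) = ennreal m * ennreal (\<Phi> (u n))"
            using m1 phi_basic(3)[OF Phi] by (intro ennreal_mult) auto
          ultimately have "ennreal m * (ennreal (\<Phi> (u n)) * emeasure M (E n))
                   \<le> ennreal (\<Phi> (k * (z n * u n))) * emeasure M (E n)"
            by (simp add: mult.assoc)
          moreover have "ennreal m * 1 \<le> ennreal m * (ennreal (\<Phi> (u n)) * emeasure M (E n))"
            using low[of n] by (intro mult_left_mono) auto
          ultimately have "ennreal m \<le> ennreal r" using Ilow[of k z n] Ir by simp
          hence "m \<le> r" using r0 by simp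
          hence "\<bar>z n\<bar> \<le> r / k" using k(1) by (simp add: m_def field_simps)
          also have "\<dots> \<le> e" unfolding e r_def[symmetric] using pf(3)[OF r0] k(1)
            by (simp add: divide_right_mono)
          finally show ?thesis .
        qed
      qed simp
    qed
    show "orlicz_norm M \<Phi> p (P z) \<le> (1 + \<epsilon>) * sup_norm z"
      unfolding normS s_def[symmetric]
    proof (rule field_le_epsilon)
      fix e :: real assume e: "0 < e"
      have epos: "1 + \<epsilon> > 0" proof -
        have "0 < (1+d)^2" using d by simp
        thus ?thesis using d by linarith
      qed
      define s' where "s' = s + e / (1 + \<epsilon>)"
      have ss': "sup_norm z < s'" using e epos by (simp add: s'_def s_def)
      have s'pos: "s' > 0" using s0 e epos divide_pos_pos[OF e epos] unfolding s'_def by linarith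
      define I where "I = enn2real (I_Phi M \<Phi> (\<lambda>t. 1 / ((1+d) * s') * P z t))"
      have I: "0 \<le> I" "I \<le> d" unfolding I_def
        using Iup[OF z ss' refl] d by (auto simp: enn2real_leI)
      have "Inf (S z) \<le> (1+d) * s' * p (1, I)"
        using elemS[OF z ss'] bddS unfolding I_def by (rule cInf_lower)
      also have "\<dots> \<le> (1+d) * s' * (1 + d)"
        using pf(4)[OF I(1)] I(2) d s'pos by (intro mult_left_mono) auto
      also have "\<dots> = (1+d)^2 * s'" by (simp add: power2_eq_square)
      also have "\<dots> \<le> (1+\<epsilon>) * s'" using d(2) s'pos by (intro mult_right_mono) auto
      also have "\<dots> = (1+\<epsilon>) * s + e" using epos by (simp add: s'_def field_simps)
      finally show "Inf (S z) \<le> (1+\<epsilon>) * s + e" .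
    qed
  next
    fix z w :: "nat \<Rightarrow> real" and a b :: real
    show "AE t in M. P (\<lambda>n. a * z n + b * w n) t = a * P z t + b * P w t"
    proof (intro AE_I2)
      fix t show "P (\<lambda>n. a * z n + b * w n) t = a * P z t + b * P w t"
      proof (cases "t \<in> (\<Union>n. E n)")
        case True then obtain m where m: "t \<in> E m" by auto
        show ?thesis unfolding Pin[OF m] by (simp add: algebra_simps)
      qed (simp add: Pout)
    qed
  qed
qed



lemma em_fin: "emeasure M A \<noteq> \<infinity> \<Longrightarrow> emeasure M A = ennreal (measure M A)"
  by (rule emeasure_eq_ennreal_measure) (simp add: infinity_ennreal_def)

lemma halving:
  assumes noatom: "\<And>B. B \<subseteq> na \<Longrightarrow> \<not> measure_atom M B"
    and D: "D \<in> sets M" "D \<subseteq> na" "0 < measure M D" "emeasure M D \<noteq> \<infinity>"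
  shows "\<exists>C. C \<in> sets M \<and> C \<subseteq> D \<and> 0 < measure M C \<and> 2 * measure M C \<le> measure M D"
proof -
  have "0 < emeasure M D" using D(3) em_fin[OF D(4)] by simp
  hence "\<exists>C\<in>sets M. C \<subseteq> D \<and> emeasure M C \<noteq> 0 \<and> emeasure M (D - C) \<noteq> 0"
    using noatom[OF D(2)] D(1) unfolding measure_atom_def by auto
  then obtain C where C: "C \<in> sets M" "C \<subseteq> D" "emeasure M C \<noteq> 0" "emeasure M (D - C) \<noteq> 0" by auto
  have finC: "emeasure M C \<noteq> \<infinity>" using emeasure_mono[OF C(2) D(1)] D(4) by (auto simp: top_unique)
  have finDC: "emeasure M (D - C) \<noteq> \<infinity>" using emeasure_mono[of "D - C" D M] D(1,4) by (auto simp: top_unique)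
  have mC: "0 < measure M C" using C(3) em_fin[OF finC] by (simp add: zero_less_measure_iff)
  have mDC: "0 < measure M (D - C)" using C(4) em_fin[OF finDC] by (simp add: zero_less_measure_iff)
  have sum: "measure M D = measure M C + measure M (D - C)"
  proof -
    have "D = C \<union> (D - C)" using C(2) by auto
    hence "measure M D = measure M (C \<union> (D - C))" by simp
    also have "\<dots> = measure M C + measure M (D - C)"
      using finC finDC C(1) D(1) by (intro measure_Union) auto
    finally show ?thesis .
  qed
  show ?thesis
  proof (cases "2 * measure M C \<le> measure M D")
    case True thus ?thesis using C mC by blast
  next
    case False
    thus ?thesis using mDC sum D(1) C(1) by (intro exI[of _ "D - C"]) auto
  qed
qed

lemma small_subset:
  assumes sf: "sigma_finite_measure M" and noatom: "\<And>B. B \<subseteq> na \<Longrightarrow> \<not> measure_atom M B"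
    and D: "D \<in> sets M" "D \<subseteq> na" "0 < emeasure M D" and eta: "\<eta> > 0"
  shows "\<exists>C. C \<in> sets M \<and> C \<subseteq> D \<and> 0 < measure M C \<and> measure M C \<le> \<eta> \<and> emeasure M C \<noteq> \<infinity>"
proof -
  obtain D' where D': "D' \<in> sets M" "D' \<subseteq> D" "0 < emeasure M D'" "emeasure M D' \<noteq> \<infinity>"
  proof (cases "emeasure M D = \<infinity>")
    case True
    from sigma_finite_measure.approx_PInf_emeasure_with_finite[OF sf D(1) True, of 0]
    obtain Z where "Z \<in> sets M" "Z \<subseteq> D" "emeasure M Z < \<infinity>" "emeasure M Z > 0" by auto
    thus ?thesis using that by auto
  next
    case False thus ?thesis using that D by auto
  qed
  have D'pos: "0 < measure M D'" using D'(3) em_fin[OF D'(4)] by simp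
  have fin: "emeasure M C \<noteq> \<infinity>" if "C \<subseteq> D'" for C
    using emeasure_mono[OF that D'(1)] D'(4) by (auto simp: top_unique)
  have iter: "\<exists>C. C \<in> sets M \<and> C \<subseteq> D' \<and> 0 < measure M C \<and> 2^k * measure M C \<le> measure M D'" for k
  proof (induction k)
    case 0 thus ?case using D' D'pos by (intro exI[of _ D']) auto
  next
    case (Suc k)
    then obtain C where C: "C \<in> sets M" "C \<subseteq> D'" "0 < measure M C" "2^k * measure M C \<le> measure M D'" by auto
    have Cna: "C \<subseteq> na" using C(2) D'(2) D(2) by auto
    obtain C' where C': "C' \<in> sets M" "C' \<subseteq> C" "0 < measure M C'" "2 * measure M C' \<le> measure M C"
      using halving[OF noatom C(1) Cna C(3) fin[OF C(2)]] by auto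
    have "2^Suc k * measure M C' = 2^k * (2 * measure M C')" by simp
    also have "\<dots> \<le> 2^k * measure M C" using C' by (intro mult_left_mono) auto
    also have "\<dots> \<le> measure M D'" using C(4) .
    finally show ?case using C' C(2) by (intro exI[of _ C']) auto
  qed
  obtain k :: nat where k: "measure M D' / \<eta> < 2^k" using real_arch_pow[of 2 "measure M D' / \<eta>"] by auto
  obtain C where C: "C \<in> sets M" "C \<subseteq> D'" "0 < measure M C" "2^k * measure M C \<le> measure M D'"
    using iter[of k] by auto
  have "measure M D' < 2^k * \<eta>" using k eta by (simp add: field_simps)
  hence "2^k * measure M C < 2^k * \<eta>" using C(4) by linarith
  hence "measure M C < \<eta>" by simp
  thus ?thesis using C D'(2) fin[OF C(2)] by (intro exI[of _ C]) auto
qed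

lemma band_finite:
  assumes sf: "sigma_finite_measure M" and noatom: "\<And>B. B \<subseteq> na \<Longrightarrow> \<not> measure_atom M B"
    and B: "B \<in> sets M" "B \<subseteq> na" "emeasure M B \<noteq> \<infinity>" and a: "a > 0" "2 * a < measure M B"
  shows "\<exists>C. C \<in> sets M \<and> C \<subseteq> B \<and> a \<le> measure M C \<and> measure M C \<le> 2 * a"
proof (rule ccontr)
  assume contra: "\<not> ?thesis"
  have fin: "emeasure M C \<noteq> \<infinity>" if "C \<subseteq> B" for C
    using emeasure_mono[OF that B(1)] B(3) by (auto simp: top_unique)
  define good where "good U D \<longleftrightarrow> D \<in> sets M \<and> D \<subseteq> B - U \<and> measure M D \<le> a" for U D
  have step: "\<exists>D. good U D \<and> (\<forall>D'. good U D' \<longrightarrow> measure M D' \<le> 2 * measure M D)" for U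
  proof -
    define T where "T = measure M ` {D. good U D}"
    have g0: "good U {}" unfolding good_def using a by simp
    have Tne: "T \<noteq> {}" unfolding T_def using g0 by blast
    have Tbdd: "bdd_above T" unfolding T_def good_def by (intro bdd_aboveI[of _ a]) blast
    show ?thesis
    proof (cases "Sup T \<le> 0")
      case True
      note g0
      moreover have "measure M D' \<le> 0" if "good U D'" for D'
        using cSup_upper[OF _ Tbdd, of "measure M D'"] that True unfolding T_def by auto
      ultimately show ?thesis by (intro exI[of _ "{}"]) auto
    next
      case False
      hence "Sup T / 2 < Sup T" by simp
      then obtain x where x: "x \<in> T" "Sup T / 2 < x" using less_cSup_iff[OF Tne Tbdd] by auto
      then obtain D where D: "good U D" "measure M D = x" unfolding T_def by auto
      have "measure M D' \<le> 2 * measure M D" if "good U D'" for D'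
        using cSup_upper[OF _ Tbdd, of "measure M D'"] that x D unfolding T_def by auto
      thus ?thesis using D by auto
    qed
  qed
  define f where "f U = (SOME D. good U D \<and> (\<forall>D'. good U D' \<longrightarrow> measure M D' \<le> 2 * measure M D))" for U
  have f: "good U (f U)" "\<And>D'. good U D' \<Longrightarrow> measure M D' \<le> 2 * measure M (f U)" for U
    using someI_ex[OF step[of U]] unfolding f_def by auto
  define Us where "Us = rec_nat {} (\<lambda>_ U. U \<union> f U)"
  have Us0: "Us 0 = {}" and UsS: "Us (Suc k) = Us k \<union> f (Us k)" for k by (simp_all add: Us_def)
  have inv: "Us k \<in> sets M \<and> Us k \<subseteq> B \<and> measure M (Us k) < a \<and> measure M (Us k) = (\<Sum>j<k. measure M (f (Us j)))" for k
  proof (induction k)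
    case 0 thus ?case using a by (simp add: Us0)
  next
    case (Suc k)
    have g: "good (Us k) (f (Us k))" by (rule f)
    hence fs: "f (Us k) \<in> sets M" "f (Us k) \<subseteq> B - Us k" "measure M (f (Us k)) \<le> a" by (auto simp: good_def)
    have sets: "Us (Suc k) \<in> sets M" "Us (Suc k) \<subseteq> B" using Suc fs by (auto simp: UsS)
    have meq: "measure M (Us (Suc k)) = measure M (Us k) + measure M (f (Us k))"
      unfolding UsS using Suc fs by (intro measure_Union fin) auto
    hence lt2: "measure M (Us (Suc k)) \<le> 2 * a" using Suc fs by linarith
    have "\<not> a \<le> measure M (Us (Suc k))"
    proof
      assume "a \<le> measure M (Us (Suc k))"
      with lt2 sets have "\<exists>C. C \<in> sets M \<and> C \<subseteq> B \<and> a \<le> measure M C \<and> measure M C \<le> 2 * a" by blast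
      with contra show False by blast
    qed
    hence "measure M (Us (Suc k)) < a" by simp
    thus ?case using sets meq Suc by simp
  qed
  define d where "d k = measure M (f (Us k))" for k
  have summ: "summable d"
  proof (rule summableI_nonneg_bounded[of _ a])
    fix n show "0 \<le> d n" by (simp add: d_def)
    have "(\<Sum>i<n. d i) = measure M (Us n)" using inv[of n] by (simp add: d_def)
    thus "(\<Sum>i<n. d i) \<le> a" using inv[of n] by simp
  qed
  have d0: "d \<longlonglongrightarrow> 0" by (rule summable_LIMSEQ_zero[OF summ])
  define V where "V = (\<Union>k. Us k)"
  have incU: "incseq Us" by (rule incseq_SucI) (simp add: UsS)
  have Vsets: "V \<in> sets M" "V \<subseteq> B" unfolding V_def using inv by auto
  have "emeasure M V = (SUP k. emeasure M (Us k))"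
    unfolding V_def using inv incU by (intro SUP_emeasure_incseq[symmetric]) auto
  also have "\<dots> \<le> ennreal a"
  proof (rule SUP_least)
    fix k :: nat
    have "emeasure M (Us k) = ennreal (measure M (Us k))" using em_fin[OF fin[of "Us k"]] inv by simp
    thus "emeasure M (Us k) \<le> ennreal a" using inv[of k] by (simp add: ennreal_leI)
  qed
  finally have "emeasure M V \<le> ennreal a" .
  hence mV: "measure M V \<le> a" using em_fin[OF fin[OF Vsets(2)]] a by simp
  define R where "R = B - V"
  have R: "R \<in> sets M" "R \<subseteq> na" using Vsets B by (auto simp: R_def)
  have mR: "measure M R = measure M B - measure M V" unfolding R_def
    using B Vsets by (intro measure_Diff) auto
  hence "0 < measure M R" using mV a by linarith
  hence "0 < emeasure M R" using em_fin[OF fin[of R]] by (simp add: R_def)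
  then obtain D' where D': "D' \<in> sets M" "D' \<subseteq> R" "0 < measure M D'" "measure M D' \<le> a"
    using small_subset[OF sf noatom R(1,2) _ a(1)] by blast
  have gD: "good (Us k) D'" for k unfolding good_def using D' by (auto simp: R_def V_def)
  have all: "\<And>k. measure M D' \<le> 2 * d k" using f(2)[OF gD] by (simp add: d_def)
  have "eventually (\<lambda>k. d k < measure M D' / 2) sequentially"
    using d0 D'(3) by (intro order_tendstoD) auto
  then obtain k where k: "d k < measure M D' / 2" by (auto simp: eventually_sequentially)
  from all[of k] k show False by linarith
qed

lemma band:
  assumes sf: "sigma_finite_measure M" and noatom: "\<And>B. B \<subseteq> na \<Longrightarrow> \<not> measure_atom M B"
    and B: "B \<in> sets M" "B \<subseteq> na" "ennreal (2 * a) < emeasure M B" and a: "a > 0"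
  shows "\<exists>C. C \<in> sets M \<and> C \<subseteq> B \<and> ennreal a \<le> emeasure M C \<and> emeasure M C \<le> ennreal (2 * a)"
proof -
  obtain B' where B': "B' \<in> sets M" "B' \<subseteq> B" "emeasure M B' \<noteq> \<infinity>" "ennreal (2 * a) < emeasure M B'"
  proof (cases "emeasure M B = \<infinity>")
    case True
    from sigma_finite_measure.approx_PInf_emeasure_with_finite[OF sf B(1) True, of "2 * a"]
    obtain Z where "Z \<in> sets M" "Z \<subseteq> B" "emeasure M Z < \<infinity>" "emeasure M Z > ennreal (2 * a)" by auto
    thus ?thesis using that by auto
  next
    case False thus ?thesis using that B by auto
  qed
  have mB': "2 * a < measure M B'" using B'(4) em_fin[OF B'(3)] a
    by (simp add: ennreal_less_iff)
  obtain C where C: "C \<in> sets M" "C \<subseteq> B'" "a \<le> measure M C" "measure M C \<le> 2 * a"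
  proof -
    have "B' \<subseteq> na" using B'(2) B(2) by auto
    from band_finite[OF sf noatom B'(1) this B'(3) a mB'] show ?thesis using that by auto
  qed
  have finC: "emeasure M C \<noteq> \<infinity>" using emeasure_mono[OF C(2) B'(1)] B'(3) by (auto simp: top_unique)
  show ?thesis using C B'(2) em_fin[OF finC]
    by (intro exI[of _ C]) (auto simp: ennreal_leI)
qed



lemma dep_choice:
  fixes Inv :: "nat \<Rightarrow> 'a set \<Rightarrow> bool" and Q :: "nat \<Rightarrow> 'a set \<Rightarrow> bool"
  assumes I0: "Inv 0 {}" and step: "\<And>n U. Inv n U \<Longrightarrow> \<exists>E. E \<inter> U = {} \<and> Q n E \<and> Inv (Suc n) (U \<union> E)"
  shows "\<exists>E. disjoint_family E \<and> (\<forall>n. Q n (E n))"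
proof -
  define g where "g n U = (SOME E. E \<inter> U = {} \<and> Q n E \<and> Inv (Suc n) (U \<union> E))" for n U
  define Us where "Us = rec_nat {} (\<lambda>n U. U \<union> g n U)"
  have Us0: "Us 0 = {}" and UsS: "Us (Suc n) = Us n \<union> g n (Us n)" for n by (simp_all add: Us_def)
  have I: "Inv n (Us n)" for n
  proof (induction n)
    case 0 thus ?case using I0 Us0 by simp
  next
    case (Suc n)
    have "g n (Us n) \<inter> Us n = {} \<and> Q n (g n (Us n)) \<and> Inv (Suc n) (Us n \<union> g n (Us n))"
      unfolding g_def by (rule someI_ex[OF step[OF Suc]])
    thus ?case unfolding UsS by simp
  qed
  have G: "g n (Us n) \<inter> Us n = {} \<and> Q n (g n (Us n))" for n
    using someI_ex[OF step[OF I[of n]]] unfolding g_def by simp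
  have inc: "incseq Us" by (rule incseq_SucI) (simp add: UsS)
  have sub: "g m (Us m) \<subseteq> Us n" if "m < n" for m n
  proof -
    have "g m (Us m) \<subseteq> Us (Suc m)" by (simp add: UsS)
    also have "\<dots> \<subseteq> Us n" using inc that by (simp add: incseq_def)
    finally show ?thesis .
  qed
  have disj: "disjoint_family (\<lambda>n. g n (Us n))"
    unfolding disjoint_family_on_def
  proof (intro ballI impI)
    fix m n :: nat assume "m \<noteq> n"
    thus "g m (Us m) \<inter> g n (Us n) = {}"
    proof (cases "m < n")
      case True thus ?thesis using sub[OF True] G[of n] by blast
    next
      case False hence "n < m" using \<open>m \<noteq> n\<close> by simp
      thus ?thesis using sub[of n m] G[of m] by blast
    qed
  qed
  show ?thesis using disj G by blast
qed

lemma pick: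
  fixes \<Phi> :: "real \<Rightarrow> real"
  assumes Phi: "orlicz_function \<Phi>" and pos: "0 < \<Phi> u" and r: "\<Phi> (u/(1+d)) < c * \<Phi> u"
    and E: "ennreal (1 / \<Phi> u) \<le> emeasure M E" "emeasure M E \<le> ennreal (2 * (1 / \<Phi> u))"
  shows "1 \<le> ennreal (\<Phi> u) * emeasure M E" "ennreal (\<Phi> (u/(1+d))) * emeasure M E \<le> ennreal (2 * c)"
proof -
  have "ennreal 1 = ennreal (\<Phi> u) * ennreal (1 / \<Phi> u)"
    using pos by (simp add: ennreal_mult[symmetric])
  also have "\<dots> \<le> ennreal (\<Phi> u) * emeasure M E" using E(1) by (intro mult_left_mono) auto
  finally show "1 \<le> ennreal (\<Phi> u) * emeasure M E" by simp
  have nn: "0 \<le> \<Phi> (u/(1+d))" using phi_basic(3)[OF Phi] .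
  have "ennreal (\<Phi> (u/(1+d))) * emeasure M E \<le> ennreal (\<Phi> (u/(1+d))) * ennreal (2 * (1 / \<Phi> u))"
    using E(2) by (intro mult_left_mono) auto
  also have "\<dots> = ennreal (\<Phi> (u/(1+d)) * (2 * (1 / \<Phi> u)))"
    using nn pos by (intro ennreal_mult[symmetric]) auto
  also have "\<dots> \<le> ennreal (2 * c)"
  proof (intro ennreal_leI)
    have "\<Phi> (u/(1+d)) * (2 * (1 / \<Phi> u)) = 2 * (\<Phi> (u/(1+d)) / \<Phi> u)" by simp
    also have "\<Phi> (u/(1+d)) / \<Phi> u \<le> c" using r pos by (simp add: divide_le_eq less_imp_le)
    hence "2 * (\<Phi> (u/(1+d)) / \<Phi> u) \<le> 2 * c" by simp
    finally show "\<Phi> (u/(1+d)) * (2 * (1 / \<Phi> u)) \<le> 2 * c" .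
  qed
  finally show "ennreal (\<Phi> (u/(1+d))) * emeasure M E \<le> ennreal (2 * c)" .
qed

definition concl where
  "concl M \<Phi> p \<epsilon> \<longleftrightarrow> (\<exists>P :: (nat \<Rightarrow> real) \<Rightarrow> ('a \<Rightarrow> real).
           (\<forall>z\<in>linfty. P z \<in> orlicz_space M \<Phi>) \<and>
           (\<forall>z\<in>linfty. \<forall>w\<in>linfty. \<forall>a b.
              AE t in M. P (\<lambda>n. a * z n + b * w n) t = a * P z t + b * P w t) \<and>
           (\<forall>z\<in>linfty. (\<forall>n. 0 \<le> z n) \<longrightarrow> (AE t in M. 0 \<le> P z t)) \<and>
           (\<forall>z\<in>linfty. sup_norm z \<le> orlicz_norm M \<Phi> p (P z) \<and>
                        orlicz_norm M \<Phi> p (P z) \<le> (1 + \<epsilon>) * sup_norm z))"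

lemma assemble:
  fixes M :: "'a measure" and \<Phi> :: "real \<Rightarrow> real"
  assumes Phi: "orlicz_function \<Phi>" and pn: "lattice_norm p" "p (1, 0) = 1" "p (0, 1) = 1"
    and eps: "\<epsilon> > 0"
    and H: "\<And>d. d > 0 \<Longrightarrow> \<exists>Inv. Inv 0 {} \<and> (\<forall>n U. Inv n U \<longrightarrow> (\<exists>E u. E \<in> sets M \<and> E \<inter> U = {} \<and> 0 \<le> u
        \<and> 1 \<le> ennreal (\<Phi> u) * emeasure M E
        \<and> ennreal (\<Phi> (u/(1+d))) * emeasure M E \<le> ennreal (d * (1/2)^Suc n)
        \<and> Inv (Suc n) (U \<union> E)))"
  shows "concl M \<Phi> p \<epsilon>"
proof -
  define d where "d = min 1 \<epsilon> / 3"
  have d0: "d > 0" using eps by (simp add: d_def)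
  have d1: "d \<le> 1/3" "3 * d \<le> \<epsilon>" by (auto simp: d_def)
  have dsq: "(1+d)^2 \<le> 1 + \<epsilon>"
  proof -
    have "(1+d)^2 = 1 + 2*d + d*d" by (simp add: power2_eq_square algebra_simps)
    also have "d * d \<le> d * 1" using d0 d1 by (intro mult_left_mono) auto
    hence "1 + 2*d + d*d \<le> 1 + 3 * d" by simp
    finally show ?thesis using d1 by simp
  qed
  obtain Inv where I0: "Inv 0 {}" and st: "\<And>n U. Inv n U \<Longrightarrow> (\<exists>E u. E \<in> sets M \<and> E \<inter> U = {} \<and> 0 \<le> u
        \<and> 1 \<le> ennreal (\<Phi> u) * emeasure M E
        \<and> ennreal (\<Phi> (u/(1+d))) * emeasure M E \<le> ennreal (d * (1/2)^Suc n)
        \<and> Inv (Suc n) (U \<union> E))" using H[OF d0] by blast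
  define Q where "Q n E \<longleftrightarrow> E \<in> sets M \<and> (\<exists>u. 0 \<le> u \<and> 1 \<le> ennreal (\<Phi> u) * emeasure M E
        \<and> ennreal (\<Phi> (u/(1+d))) * emeasure M E \<le> ennreal (d * (1/2)^Suc n))" for n E
  have "\<exists>E. disjoint_family E \<and> (\<forall>n. Q n (E n))"
  proof (rule dep_choice[of Inv])
    show "Inv 0 {}" by (rule I0)
    fix n U assume "Inv n U"
    from st[OF this] show "\<exists>E. E \<inter> U = {} \<and> Q n E \<and> Inv (Suc n) (U \<union> E)"
      unfolding Q_def by blast
  qed
  then obtain E where disj: "disjoint_family E" and QE: "\<And>n. Q n (E n)" by blast
  have "\<forall>n. \<exists>u. 0 \<le> u \<and> 1 \<le> ennreal (\<Phi> u) * emeasure M (E n)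
        \<and> ennreal (\<Phi> (u/(1+d))) * emeasure M (E n) \<le> ennreal (d * (1/2)^Suc n)"
    using QE unfolding Q_def by blast
  then obtain u where u: "\<And>n. 0 \<le> u n" "\<And>n. 1 \<le> ennreal (\<Phi> (u n)) * emeasure M (E n)"
      "\<And>n. ennreal (\<Phi> (u n/(1+d))) * emeasure M (E n) \<le> ennreal (d * (1/2)^Suc n)"
    by metis
  have meas: "\<And>n. E n \<in> sets M" using QE unfolding Q_def by blast
  have sm: "(\<lambda>n. d * (1/2::real)^Suc n) sums (d * 1)"
    by (rule sums_mult[OF power_half_series])
  have "(\<Sum>n. ennreal (\<Phi> (u n / (1+d))) * emeasure M (E n)) \<le> (\<Sum>n. ennreal (d * (1/2)^Suc n))"
    by (intro suminf_le summableI u(3))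
  also have "\<dots> = ennreal (\<Sum>n. d * (1/2)^Suc n)"
    using d0 sm by (intro suminf_ennreal2) (auto simp: sums_iff)
  also have "(\<Sum>n. d * (1/2::real)^Suc n) = d" using sm by (simp add: sums_iff)
  finally have up: "(\<Sum>n. ennreal (\<Phi> (u n / (1+d))) * emeasure M (E n)) \<le> ennreal d" .
  show ?thesis unfolding concl_def
    by (rule core[OF Phi pn disj meas u(1) u(2) up d0 dsq])
qed



lemma pos_of_ratio:
  fixes \<Phi> :: "real \<Rightarrow> real"
  assumes Phi: "orlicz_function \<Phi>" and r: "\<Phi> (u/(1+d)) < c * \<Phi> u" and c: "c > 0"
  shows "0 < \<Phi> u"
proof -
  have "0 < c * \<Phi> u" using r phi_basic(3)[OF Phi, of "u/(1+d)"] by linarith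
  thus ?thesis using c by (simp add: zero_less_mult_iff)
qed

lemma case_inf:
  fixes M :: "'a measure" and \<Phi> :: "real \<Rightarrow> real"
  assumes sf: "sigma_finite_measure M" and Phi: "orlicz_function \<Phi>"
    and pn: "lattice_norm p" "p (1, 0) = 1" "p (0, 1) = 1" and eps: "\<epsilon> > 0"
    and na: "na \<in> sets M" "emeasure M na = \<infinity>"
    and noatom: "\<And>B. B \<subseteq> na \<Longrightarrow> \<not> measure_atom M B" and nd: "\<not> delta2_Rplus \<Phi>"
  shows "concl M \<Phi> p \<epsilon>"
proof (rule assemble[OF Phi pn eps])
  fix d :: real assume d: "d > 0"
  show "\<exists>Inv. Inv 0 {} \<and> (\<forall>n U. Inv n U \<longrightarrow> (\<exists>E u. E \<in> sets M \<and> E \<inter> U = {} \<and> 0 \<le> u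
        \<and> 1 \<le> ennreal (\<Phi> u) * emeasure M E
        \<and> ennreal (\<Phi> (u/(1+d))) * emeasure M E \<le> ennreal (d * (1/2)^Suc n)
        \<and> Inv (Suc n) (U \<union> E)))"
  proof (intro exI[of _ "\<lambda>n U. U \<in> sets M \<and> U \<subseteq> na \<and> emeasure M U < \<infinity>"] conjI allI impI)
    show "{} \<in> sets M" "{} \<subseteq> na" "emeasure M {} < \<infinity>" by simp_all
    fix n U assume U: "U \<in> sets M \<and> U \<subseteq> na \<and> emeasure M U < \<infinity>"
    define c where "c = d * (1/2)^Suc n / 2"
    have c: "c > 0" using d by (simp add: c_def)
    obtain u where u: "u \<ge> 0" "\<Phi> (u/(1+d)) < c * \<Phi> u" using ratio_Rplus[OF Phi nd d c] by blast
    have pos: "0 < \<Phi> u" by (rule pos_of_ratio[OF Phi u(2) c])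
    define a where "a = 1 / \<Phi> u"
    have a: "a > 0" using pos by (simp add: a_def)
    define B where "B = na - U"
    have B: "B \<in> sets M" "B \<subseteq> na" using na U by (auto simp: B_def)
    have "emeasure M B = \<infinity>"
    proof (rule ccontr)
      assume "emeasure M B \<noteq> \<infinity>"
      hence "emeasure M B + emeasure M U < \<infinity>" using U by (simp add: less_top)
      moreover have "emeasure M na \<le> emeasure M B + emeasure M U"
      proof -
        have "na = B \<union> U" using U by (auto simp: B_def)
        hence "emeasure M na = emeasure M (B \<union> U)" by simp
        also have "\<dots> \<le> emeasure M B + emeasure M U" using B U by (intro emeasure_subadditive) auto
        finally show ?thesis .
      qed
      ultimately show False using na(2) by (auto simp: top_unique ennreal_add_eq_top)
    qed
    hence Bgt: "ennreal (2 * a) < emeasure M B" by simp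
    obtain E where E: "E \<in> sets M" "E \<subseteq> B" "ennreal a \<le> emeasure M E" "emeasure M E \<le> ennreal (2 * a)"
      using band[OF sf noatom B Bgt a] by blast
    have pk: "1 \<le> ennreal (\<Phi> u) * emeasure M E" "ennreal (\<Phi> (u/(1+d))) * emeasure M E \<le> ennreal (2 * c)"
      using pick[OF Phi pos u(2), of M E] E(3,4) unfolding a_def by auto
    have "emeasure M (U \<union> E) \<le> emeasure M U + emeasure M E" using U E by (intro emeasure_subadditive) auto
    also have "\<dots> < \<infinity>" using U E(4) by (simp add: less_top[symmetric] top_unique) (metis ennreal_neq_top top_unique)
    finally have fin: "emeasure M (U \<union> E) < \<infinity>" .
    show "\<exists>E u. E \<in> sets M \<and> E \<inter> U = {} \<and> 0 \<le> u
        \<and> 1 \<le> ennreal (\<Phi> u) * emeasure M E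
        \<and> ennreal (\<Phi> (u/(1+d))) * emeasure M E \<le> ennreal (d * (1/2)^Suc n)
        \<and> (U \<union> E \<in> sets M \<and> U \<union> E \<subseteq> na \<and> emeasure M (U \<union> E) < \<infinity>)"
      using E pk u(1) U B fin by (intro exI[of _ E] exI[of _ u]) (auto simp: B_def c_def)
  qed
qed


lemma case_fin:
  fixes M :: "'a measure" and \<Phi> :: "real \<Rightarrow> real"
  assumes sf: "sigma_finite_measure M" and Phi: "orlicz_function \<Phi>"
    and pn: "lattice_norm p" "p (1, 0) = 1" "p (0, 1) = 1" and eps: "\<epsilon> > 0"
    and na: "na \<in> sets M" "0 < emeasure M na" "emeasure M na \<noteq> \<infinity>"
    and noatom: "\<And>B. B \<subseteq> na \<Longrightarrow> \<not> measure_atom M B" and nd: "\<not> delta2_infty \<Phi>"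
  shows "concl M \<Phi> p \<epsilon>"
proof (rule assemble[OF Phi pn eps])
  define m where "m = measure M na"
  have m: "m > 0" using na(2) em_fin[OF na(3)] by (simp add: m_def)
  have finsub: "emeasure M X \<noteq> \<infinity>" if "X \<subseteq> na" for X
    using emeasure_mono[OF that na(1)] na(3) by (auto simp: top_unique)
  fix d :: real assume d: "d > 0"
  show "\<exists>Inv. Inv 0 {} \<and> (\<forall>n U. Inv n U \<longrightarrow> (\<exists>E u. E \<in> sets M \<and> E \<inter> U = {} \<and> 0 \<le> u
        \<and> 1 \<le> ennreal (\<Phi> u) * emeasure M E
        \<and> ennreal (\<Phi> (u/(1+d))) * emeasure M E \<le> ennreal (d * (1/2)^Suc n)
        \<and> Inv (Suc n) (U \<union> E)))"
  proof (intro exI[of _ "\<lambda>n U. U \<in> sets M \<and> U \<subseteq> na \<and> measure M U \<le> m/2 - m * (1/2)^Suc n"] conjI allI impI)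
    show "{} \<in> sets M" "{} \<subseteq> na" "measure M {} \<le> m/2 - m * (1/2)^Suc 0" by simp_all
    fix n U assume U: "U \<in> sets M \<and> U \<subseteq> na \<and> measure M U \<le> m/2 - m * (1/2)^Suc n"
    define q where "q = (1/2::real)^Suc n"
    have q: "q > 0" "q \<le> 1/2" "(1/2::real)^Suc (Suc n) = q / 2" by (auto simp: q_def power_le_one)
    define c where "c = d * q / 2"
    have c: "c > 0" using d q by (simp add: c_def)
    define T where "T = 4 / (m * q)"
    have T: "T > 0" using m q by (simp add: T_def)
    obtain V where V: "V \<ge> 0" "T \<le> \<Phi> V" using phi_unbounded[OF Phi] by blast
    have mx: "max 1 V > 0" by simp
    obtain u where u: "u \<ge> max 1 V" "\<Phi> (u/(1+d)) < c * \<Phi> u"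
      using ratio_infty[OF Phi nd d c mx] by blast
    have u0: "u \<ge> 0" using u(1) by simp
    have "\<Phi> V \<le> \<Phi> u" using V u(1) by (intro phi_mono[OF Phi]) auto
    hence Tu: "T \<le> \<Phi> u" using V by simp
    have pos: "0 < \<Phi> u" using T Tu by simp
    define a where "a = 1 / \<Phi> u"
    have a: "a > 0" using pos by (simp add: a_def)
    have a2: "2 * a \<le> m * q / 2"
    proof -
      have "2 * a = 2 / \<Phi> u" by (simp add: a_def)
      also have "\<dots> \<le> 2 / T" using T Tu by (intro divide_left_mono) auto
      also have "\<dots> = m * q / 2" using m q by (simp add: T_def)
      finally show ?thesis .
    qed
    define B where "B = na - U"
    have B: "B \<in> sets M" "B \<subseteq> na" using na U by (auto simp: B_def)
    have mB: "measure M B = m - measure M U" unfolding B_def m_def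
      using U na by (intro measure_Diff) auto
    have mU: "measure M U \<le> m/2 - m * q" using U by (simp add: q_def)
    have mq: "0 < m * q" using m q by simp
    have "2 * a < measure M B" using mB mU a2 mq m by linarith
    hence Bgt: "ennreal (2 * a) < emeasure M B" using em_fin[OF finsub[OF B(2)]] a by (simp add: ennreal_less_iff)
    obtain E where E: "E \<in> sets M" "E \<subseteq> B" "ennreal a \<le> emeasure M E" "emeasure M E \<le> ennreal (2 * a)"
      using band[OF sf noatom B Bgt a] by blast
    have pk: "1 \<le> ennreal (\<Phi> u) * emeasure M E" "ennreal (\<Phi> (u/(1+d))) * emeasure M E \<le> ennreal (2 * c)"
      using pick[OF Phi pos u(2), of M E] E(3,4) unfolding a_def by auto
    have Ena: "E \<subseteq> na" using E(2) B(2) by auto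
    have mE: "measure M E \<le> 2 * a" using E(4) em_fin[OF finsub[OF Ena]] a by simp
    have mUE: "measure M (U \<union> E) = measure M U + measure M E"
      using U E finsub[OF Ena] finsub[of U] by (intro measure_Union) (auto simp: B_def)
    have inv: "measure M (U \<union> E) \<le> m/2 - m * (1/2)^Suc (Suc n)"
      unfolding q(3) using mUE mE a2 mU by linarith
    show "\<exists>E u. E \<in> sets M \<and> E \<inter> U = {} \<and> 0 \<le> u
        \<and> 1 \<le> ennreal (\<Phi> u) * emeasure M E
        \<and> ennreal (\<Phi> (u/(1+d))) * emeasure M E \<le> ennreal (d * (1/2)^Suc n)
        \<and> (U \<union> E \<in> sets M \<and> U \<union> E \<subseteq> na \<and> measure M (U \<union> E) \<le> m/2 - m * (1/2)^Suc (Suc n))"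
      using E pk u0 U B inv by (intro exI[of _ E] exI[of _ u]) (auto simp: B_def c_def q_def)
  qed
qed

lemma case_atoms:
  fixes M :: "'a measure" and \<Phi> :: "real \<Rightarrow> real" and A :: "nat \<Rightarrow> 'a set"
  assumes Phi: "orlicz_function \<Phi>"
    and pn: "lattice_norm p" "p (1, 0) = 1" "p (0, 1) = 1" and eps: "\<epsilon> > 0"
    and A: "\<And>i. A i \<in> sets M" "\<And>i. emeasure M (A i) = 1" "disjoint_family A"
    and nd: "\<not> delta2_zero \<Phi>"
  shows "concl M \<Phi> p \<epsilon>"
proof (rule assemble[OF Phi pn eps])
  define U0 where "U0 = (if \<Phi> 1 \<le> 1 then 1 else 1 / \<Phi> 1)"
  have U0: "U0 > 0" "\<Phi> U0 \<le> 1"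
  proof -
    show "U0 > 0" unfolding U0_def by auto
    show "\<Phi> U0 \<le> 1"
    proof (cases "\<Phi> 1 \<le> 1")
      case True thus ?thesis by (simp add: U0_def)
    next
      case False
      hence "\<Phi> ((1 / \<Phi> 1) * 1) \<le> (1 / \<Phi> 1) * \<Phi> 1" by (intro phi_scale[OF Phi]) auto
      thus ?thesis using False by (simp add: U0_def)
    qed
  qed
  fix d :: real assume d: "d > 0"
  show "\<exists>Inv. Inv 0 {} \<and> (\<forall>n U. Inv n U \<longrightarrow> (\<exists>E u. E \<in> sets M \<and> E \<inter> U = {} \<and> 0 \<le> u
        \<and> 1 \<le> ennreal (\<Phi> u) * emeasure M E
        \<and> ennreal (\<Phi> (u/(1+d))) * emeasure M E \<le> ennreal (d * (1/2)^Suc n)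
        \<and> Inv (Suc n) (U \<union> E)))"
  proof (intro exI[of _ "\<lambda>n U. \<exists>k. U \<subseteq> (\<Union>i<k. A i)"] conjI allI impI)
    show "\<exists>k. {} \<subseteq> (\<Union>i<k. A i)" by simp
    fix n U assume "\<exists>k. U \<subseteq> (\<Union>i<k. A i)"
    then obtain k where U: "U \<subseteq> (\<Union>i<k. A i)" by blast
    define c where "c = d * (1/2)^Suc n / 2"
    have c: "c > 0" using d by (simp add: c_def)
    obtain u where u: "0 \<le> u" "u \<le> U0" "\<Phi> (u/(1+d)) < c * \<Phi> u"
      using ratio_zero[OF Phi nd d c U0(1)] by blast
    have pos: "0 < \<Phi> u" by (rule pos_of_ratio[OF Phi u(3) c])
    have le1: "\<Phi> u \<le> 1" using phi_mono[OF Phi, of u U0] u U0 by simp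
    define a where "a = 1 / \<Phi> u"
    have a1: "a \<ge> 1" using pos le1 by (simp add: a_def)
    define m where "m = nat \<lceil>a\<rceil>"
    have mr: "a \<le> real m" "real m \<le> 2 * a" using a1 by (auto simp: m_def) linarith
    define E where "E = (\<Union>i\<in>{k..<k+m}. A i)"
    have Es: "E \<in> sets M" unfolding E_def using A(1) by auto
    have "emeasure M E = (\<Sum>i\<in>{k..<k+m}. emeasure M (A i))"
      unfolding E_def using A by (intro sum_emeasure[symmetric]) (auto simp: disjoint_family_on_def disjoint_family_subset)
    also have "\<dots> = of_nat m" using A(2) by simp
    finally have mE: "emeasure M E = ennreal (real m)" by (metis ennreal_of_nat_eq_real_of_nat of_nat_id)
    have E3: "ennreal a \<le> emeasure M E" "emeasure M E \<le> ennreal (2 * a)"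
      unfolding mE using mr by (auto intro: ennreal_leI)
    have pk: "1 \<le> ennreal (\<Phi> u) * emeasure M E" "ennreal (\<Phi> (u/(1+d))) * emeasure M E \<le> ennreal (2 * c)"
      using pick[OF Phi pos u(3), of M E] E3 unfolding a_def by auto
    have disjE: "E \<inter> U = {}"
    proof (rule ccontr)
      assume "E \<inter> U \<noteq> {}"
      then obtain x where x: "x \<in> E" "x \<in> U" by blast
      from x(1) obtain i where i: "k \<le> i" "x \<in> A i" unfolding E_def by auto
      from x(2) U obtain j where j: "j < k" "x \<in> A j" by blast
      have "i \<noteq> j" using i j by simp
      hence "A i \<inter> A j = {}" using A(3) unfolding disjoint_family_on_def by simp
      thus False using i j by blast
    qed
    have inv: "U \<union> E \<subseteq> (\<Union>i<k+m. A i)"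
    proof
      fix x assume "x \<in> U \<union> E"
      thus "x \<in> (\<Union>i<k+m. A i)"
      proof
        assume "x \<in> U"
        with U obtain j where "j < k" "x \<in> A j" by blast
        thus ?thesis by (intro UN_I[of j]) auto
      next
        assume "x \<in> E"
        then obtain i where "i < k + m" "x \<in> A i" unfolding E_def by auto
        thus ?thesis by (intro UN_I[of i]) auto
      qed
    qed
    show "\<exists>E u. E \<in> sets M \<and> E \<inter> U = {} \<and> 0 \<le> u
        \<and> 1 \<le> ennreal (\<Phi> u) * emeasure M E
        \<and> ennreal (\<Phi> (u/(1+d))) * emeasure M E \<le> ennreal (d * (1/2)^Suc n)
        \<and> (\<exists>k. U \<union> E \<subseteq> (\<Union>i<k. A i))"
      using Es disjE pk u(1) inv by (intro exI[of _ E] exI[of _ u]) (auto simp: c_def)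
  qed
qed


theorem theorem3:
  fixes M :: "'a measure" and N :: "nat set" and A :: "nat \<Rightarrow> 'a set"
    and p :: "real \<times> real \<Rightarrow> real" and \<Phi> :: "real \<Rightarrow> real" and \<epsilon> :: real
  assumes "sigma_finite_measure M" and "complete_measure M"
    and "atomic_structure M N A"
    and "lattice_norm p" and "p (1, 0) = 1" and "p (0, 1) = 1"
    and "orlicz_function \<Phi>" and "\<not> suitable_delta2 M N A \<Phi>"
    and "\<epsilon> > 0"
  shows "\<exists>P :: (nat \<Rightarrow> real) \<Rightarrow> ('a \<Rightarrow> real).
           (\<forall>z\<in>linfty. P z \<in> orlicz_space M \<Phi>) \<and>
           (\<forall>z\<in>linfty. \<forall>w\<in>linfty. \<forall>a b.
              AE t in M. P (\<lambda>n. a * z n + b * w n) t = a * P z t + b * P w t) \<and>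
           (\<forall>z\<in>linfty. (\<forall>n. 0 \<le> z n) \<longrightarrow> (AE t in M. 0 \<le> P z t)) \<and>
           (\<forall>z\<in>linfty. sup_norm z \<le> orlicz_norm M \<Phi> p (P z) \<and>
                        orlicz_norm M \<Phi> p (P z) \<le> (1 + \<epsilon>) * sup_norm z)"
proof -
  note sf = assms(1) and pn = assms(4,5,6) and Phi = assms(7) and eps = assms(9)
  have NN: "(\<exists>n. N = {..<n}) \<or> N = UNIV"
    and at: "\<And>i. i \<in> N \<Longrightarrow> measure_atom M (A i) \<and> emeasure M (A i) = 1"
    and dj: "disjoint_family_on A N"
    and noat: "\<And>B. B \<subseteq> space M - (\<Union>i\<in>N. A i) \<Longrightarrow> \<not> measure_atom M B"
    using assms(3) unfolding atomic_structure_def by auto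
  define na where "na = nonatomic_part M N A"
  have Asets: "A i \<in> sets M" if "i \<in> N" for i using at[OF that] unfolding measure_atom_def by simp
  have nasets: "na \<in> sets M" unfolding na_def nonatomic_part_def
    using Asets by (intro sets.Diff sets.top sets.countable_UN) auto
  have noatom: "\<And>B. B \<subseteq> na \<Longrightarrow> \<not> measure_atom M B" using noat by (simp add: na_def nonatomic_part_def)
  have atoms_case: "concl M \<Phi> p \<epsilon>" if inf: "infinite N" and nd: "\<not> delta2_zero \<Phi>"
  proof -
    have NU: "N = UNIV" using NN inf by auto
    show ?thesis
    proof (rule case_atoms[OF Phi pn eps _ _ _ nd])
      show "\<And>i. A i \<in> sets M" using Asets NU by simp
      show "\<And>i. emeasure M (A i) = 1" using at NU by simp
      show "disjoint_family A" using dj NU by simp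
    qed
  qed
  have "concl M \<Phi> p \<epsilon>"
  proof (cases "emeasure M na = 0")
    case True
    hence "infinite N \<and> \<not> delta2_zero \<Phi>" using assms(8)
      unfolding suitable_delta2_def Let_def na_def[symmetric] by (auto split: if_splits)
    thus ?thesis using atoms_case by blast
  next
    case False
    define nc where "nc = (if emeasure M na = \<infinity> then delta2_Rplus \<Phi> else delta2_infty \<Phi>)"
    have "\<not> nc \<or> (infinite N \<and> \<not> delta2_zero \<Phi>)" using assms(8) False
      unfolding suitable_delta2_def Let_def na_def[symmetric] nc_def[symmetric] by (auto split: if_splits)
    thus ?thesis
    proof
      assume "infinite N \<and> \<not> delta2_zero \<Phi>" thus ?thesis using atoms_case by blast
    next
      assume nnc: "\<not> nc"
      show ?thesis
      proof (cases "emeasure M na = \<infinity>")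
        case True
        hence nd: "\<not> delta2_Rplus \<Phi>" using nnc by (simp add: nc_def)
        show ?thesis using case_inf[OF sf Phi pn eps nasets True noatom nd] .
      next
        case fin: False
        hence "\<not> delta2_infty \<Phi>" using nnc by (simp add: nc_def)
        moreover have "0 < emeasure M na" using False by (simp add: zero_less_iff_neq_zero)
        ultimately show ?thesis by (intro case_fin[OF sf Phi pn eps nasets _ fin noatom])
      qed
    qed
  qed
  thus ?thesis unfolding concl_def .
qed


end
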